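(* Let $m, n_0, n_1$ be positive integers and $n(\lambda) = n_0 + n_1\lambda$. There do not exist polynomials $x(\lambda), y(\lambda), z(\lambda)$ with real coefficients, two of which have degree $1$ and the third of which has degree $3$, whose constant terms $x_0 = x(0)$, $y_0 = y(0)$, $z_0 = z(0)$ are positive rational numbers satisfying $m/n_0 = 1/x_0 + 1/y_0 + 1/z_0$, and which satisfy $$\frac{m}{n(\lambda)} = \frac{1}{x(\lambda)} + \frac{1}{y(\lambda)} + \frac{1}{z(\lambda)}$$ identically in $\lambda$.
   Context: $\lambda$ is an indeterminate; the equation is an identity of rational functions in $\lambda$. *)

theory Defs
  imports Complex_Main "HOL-Computational_Algebra.Polynomial"
begin

end

theory Submission
  imports Defs
begin

lemma deg1_form: fixes p :: "real poly" assumes "degree p \<le> 1"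
  shows "p = [:coeff p 0, coeff p 1:]"
proof (rule poly_eqI)
  fix n show "coeff p n = coeff [:coeff p 0, coeff p 1:] n"
    using assms by (cases n) (auto simp: coeff_pCons coeff_eq_0 split: nat.split)
qed

lemma core:
  fixes x y z :: "real poly" and m n0 n1 :: nat
  assumes "m > 0" "n0 > 0" "n1 > 0" "degree x = 1" "degree y = 1" "degree z = 3"
    "poly x 0 > 0" "poly y 0 > 0" "poly z 0 > 0"
    and H: "\<forall>l::real. poly [:real n0, real n1:] l \<noteq> 0 \<and> poly x l \<noteq> 0 \<and>
                        poly y l \<noteq> 0 \<and> poly z l \<noteq> 0 \<longrightarrow>
              real m / poly [:real n0, real n1:] l = 1 / poly x l + 1 / poly y l + 1 / poly z l"
  shows False
proof -
  define N where "N = [:real n0, real n1:]"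
  define Q where "Q = smult (real m) (x*y*z) - N*(y*z+x*z+x*y)"
  have x0: "x \<noteq> 0" "y \<noteq> 0" "z \<noteq> 0" "N \<noteq> 0" using assms by (auto simp: N_def)
  define P where "P = N*x*y*z"
  have P0: "P \<noteq> 0" using x0 by (simp add: P_def)
  have Qr: "poly Q l = 0" if "poly P l \<noteq> 0" for l
  proof -
    have nz: "poly N l \<noteq> 0" "poly x l \<noteq> 0" "poly y l \<noteq> 0" "poly z l \<noteq> 0"
      using that by (auto simp: P_def)
    have "real m / poly N l = 1 / poly x l + 1 / poly y l + 1 / poly z l"
      using H nz by (auto simp: N_def)
    then show ?thesis using nz by (simp add: Q_def field_simps)
  qed
  have "Q = 0"
  proof (rule ccontr)
    assume "Q \<noteq> 0"
    then have "finite {l. poly Q l = 0}" by (rule poly_roots_finite)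
    moreover have "finite {l. poly P l = 0}" using P0 by (rule poly_roots_finite)
    ultimately have "finite ({l. poly Q l = 0} \<union> {l. poly P l = 0})" by simp
    moreover have "{l. poly Q l = 0} \<union> {l. poly P l = 0} = UNIV" using Qr by auto
    ultimately show False using infinite_UNIV_char_0 by (metis (full_types))
  qed
  define D where "D = smult (real m) (x*y) - N*(x+y)"
  have ZD: "z * D = N*x*y" using \<open>Q = 0\<close> unfolding Q_def D_def by (simp add: algebra_simps)
  have dN: "degree N = 1" using assms by (simp add: N_def)
  have "degree (N*x*y) = 3" using x0 assms dN by (simp add: degree_mult_eq)
  then have "D \<noteq> 0" using ZD by auto
  then have "degree (z*D) = 3 + degree D" using x0 assms by (simp add: degree_mult_eq)
  then have dD: "degree D = 0" using ZD \<open>degree (N*x*y) = 3\<close> by simp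
  define x0 a y0 b where "x0 = coeff x 0" "a = coeff x 1" "y0 = coeff y 0" "b = coeff y 1"
  have xf: "x = [:x0, a:]" "y = [:y0, b:]" using deg1_form assms unfolding x0_a_y0_b_def by auto
  have a0: "a \<noteq> 0" "b \<noteq> 0" using assms unfolding x0_a_y0_b_def
    by (metis leading_coeff_0_iff x0(1) x0(2))+
  have pos: "x0 > 0" "y0 > 0" using assms unfolding x0_a_y0_b_def by (simp_all add: poly_0_coeff_0)
  have "coeff D 2 = 0" "coeff D 1 = 0" using dD by (simp_all add: coeff_eq_0)
  then have E2: "m*a*b = n1*(a+b)" and E1: "m*(x0*b+a*y0) = n0*(a+b) + n1*(x0+y0)"
    unfolding D_def xf N_def by (simp_all add: algebra_simps numeral_2_eq_2)
  have "poly (z*D) 0 = poly (N*x*y) 0" using ZD by simp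
  then have "poly z 0 * (m*x0*y0 - n0*(x0+y0)) = n0*x0*y0"
    unfolding D_def xf N_def by (simp add: algebra_simps)
  then have c: "m*x0*y0 - n0*(x0+y0) > 0" using assms pos
    by (metis mult_pos_pos of_nat_0_less_iff zero_less_mult_pos)
  have ab: "a + b \<noteq> 0" using E2 a0 assms by auto
  have K: "n0*(a+b)^2 = m*(x0*b^2+y0*a^2)"
  proof -
    have "n0*(a+b)^2 = (a+b)*(m*(x0*b+a*y0) - n1*(x0+y0))" using E1 by (simp add: power2_eq_square algebra_simps)
    also have "\<dots> = m*(a+b)*(x0*b+a*y0) - (m*a*b)*(x0+y0)" using E2 by (simp add: algebra_simps)
    finally show ?thesis by (simp add: power2_eq_square algebra_simps)
  qed
  have CS: "(x0*b^2+y0*a^2)*(x0+y0) - x0*y0*(a+b)^2 = (x0*b - y0*a)^2"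
    by (simp add: power2_eq_square algebra_simps)
  have "(x0*b^2+y0*a^2)*(x0+y0) \<ge> x0*y0*(a+b)^2" using CS
    by (metis diff_ge_0_iff_ge zero_le_power2)
  then have "m*((x0*b^2+y0*a^2)*(x0+y0)) \<ge> m*(x0*y0*(a+b)^2)" by (simp add: mult_left_mono)
  then have "n0*(x0+y0)*(a+b)^2 \<ge> m*x0*y0*(a+b)^2" using K by (simp add: algebra_simps)
  moreover have "(a+b)^2 > 0" using ab by simp
  ultimately have "n0*(x0+y0) \<ge> m*x0*y0" by simp
  then show False using c by simp
qed
theorem lemma5:
  fixes m n0 n1 :: nat
  assumes "m > 0" and "n0 > 0" and "n1 > 0"
  shows "\<not> (\<exists>x y z :: real poly.
           ((degree x = 1 \<and> degree y = 1 \<and> degree z = 3) \<or>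
            (degree x = 1 \<and> degree y = 3 \<and> degree z = 1) \<or>
            (degree x = 3 \<and> degree y = 1 \<and> degree z = 1)) \<and>
           poly x 0 \<in> \<rat> \<and> poly y 0 \<in> \<rat> \<and> poly z 0 \<in> \<rat> \<and>
           poly x 0 > 0 \<and> poly y 0 > 0 \<and> poly z 0 > 0 \<and>
           real m / real n0 = 1 / poly x 0 + 1 / poly y 0 + 1 / poly z 0 \<and>
           (\<forall>l::real. poly [:real n0, real n1:] l \<noteq> 0 \<and> poly x l \<noteq> 0 \<and>
                        poly y l \<noteq> 0 \<and> poly z l \<noteq> 0 \<longrightarrow>
              real m / poly [:real n0, real n1:] l = 1 / poly x l + 1 / poly y l + 1 / poly z l))"
proof
  assume "\<exists>x y z :: real poly.
           ((degree x = 1 \<and> degree y = 1 \<and> degree z = 3) \<or>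
            (degree x = 1 \<and> degree y = 3 \<and> degree z = 1) \<or>
            (degree x = 3 \<and> degree y = 1 \<and> degree z = 1)) \<and>
           poly x 0 \<in> \<rat> \<and> poly y 0 \<in> \<rat> \<and> poly z 0 \<in> \<rat> \<and>
           poly x 0 > 0 \<and> poly y 0 > 0 \<and> poly z 0 > 0 \<and>
           real m / real n0 = 1 / poly x 0 + 1 / poly y 0 + 1 / poly z 0 \<and>
           (\<forall>l::real. poly [:real n0, real n1:] l \<noteq> 0 \<and> poly x l \<noteq> 0 \<and>
                        poly y l \<noteq> 0 \<and> poly z l \<noteq> 0 \<longrightarrow>
              real m / poly [:real n0, real n1:] l = 1 / poly x l + 1 / poly y l + 1 / poly z l)"
  then obtain x y z :: "real poly" where
    D: "(degree x = 1 \<and> degree y = 1 \<and> degree z = 3) \<or>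
            (degree x = 1 \<and> degree y = 3 \<and> degree z = 1) \<or>
            (degree x = 3 \<and> degree y = 1 \<and> degree z = 1)"
    and P: "poly x 0 > 0" "poly y 0 > 0" "poly z 0 > 0"
    and H: "\<forall>l::real. poly [:real n0, real n1:] l \<noteq> 0 \<and> poly x l \<noteq> 0 \<and>
                        poly y l \<noteq> 0 \<and> poly z l \<noteq> 0 \<longrightarrow>
              real m / poly [:real n0, real n1:] l = 1 / poly x l + 1 / poly y l + 1 / poly z l"
    by blast
  from D show False
  proof (elim disjE conjE)
    assume "degree x = 1" "degree y = 1" "degree z = 3"
    then show False using core[of m n0 n1 x y z] assms P H by blast
  next
    assume "degree x = 1" "degree y = 3" "degree z = 1"
    moreover have "\<forall>l::real. poly [:real n0, real n1:] l \<noteq> 0 \<and> poly x l \<noteq> 0 \<and>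
                        poly z l \<noteq> 0 \<and> poly y l \<noteq> 0 \<longrightarrow>
              real m / poly [:real n0, real n1:] l = 1 / poly x l + 1 / poly z l + 1 / poly y l"
      using H by (simp add: ac_simps)
    ultimately show False using core[of m n0 n1 x z y] assms P by blast
  next
    assume "degree x = 3" "degree y = 1" "degree z = 1"
    moreover have "\<forall>l::real. poly [:real n0, real n1:] l \<noteq> 0 \<and> poly y l \<noteq> 0 \<and>
                        poly z l \<noteq> 0 \<and> poly x l \<noteq> 0 \<longrightarrow>
              real m / poly [:real n0, real n1:] l = 1 / poly y l + 1 / poly z l + 1 / poly x l"
      using H by (simp add: ac_simps)
    ultimately show False using core[of m n0 n1 y z x] assms P by blast
  qed
qed

end
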